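(* Let $h:\mathbb{R}\to[0,+\infty)$ be a continuous super-multiplicative function (i.e. $h(xy)\ge h(x)h(y)$ for all $x,y\in\mathbb{R}$) such that $h(t)\ge t$ for all $t$. Let $f:(a,b)\to\mathbb{R}$ be a Lebesgue measurable function which is $h$-mid-convex, i.e. $$f\Big(\frac{x+y}{2}\Big)\le h\Big(\frac12\Big)\big(f(x)+f(y)\big)\quad\text{for all } x,y\in(a,b).$$ Then $f$ is continuous on $(a,b)$. *)

theory Defs
  imports "HOL-Analysis.Analysis"
begin

end

theory Submission
  imports Defs
begin

lemma lmeasurable_Icc_real: "{p..q::real} \<in> lmeasurable"
  using lmeasurable_cbox[of p q] by simp

lemma midconvex_locbdd:
  fixes f :: "real \<Rightarrow> real"
  assumes meas: "f \<in> borel_measurable (restrict_space lebesgue {a<..<b})"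
    and mc: "\<And>x y. x \<in> {a<..<b} \<Longrightarrow> y \<in> {a<..<b} \<Longrightarrow> f ((x+y)/2) \<le> (f x + f y)/2"
    and d: "d > 0" and J: "{c-2*d..c+2*d} \<subseteq> {a<..<b}"
  shows "\<exists>M. \<forall>x\<in>{c-d..c+d}. f x \<le> M"
proof -
  define S where "S n = {y \<in> {c-2*d..c+2*d}. real n < f y}" for n :: nat
  have Ssets: "S n \<in> sets lebesgue" for n
  proof -
    have "f -` {real n<..} \<inter> space (restrict_space lebesgue {a<..<b}) \<in> sets (restrict_space lebesgue {a<..<b})"
      by (rule measurable_sets[OF meas]) auto
    then have "f -` {real n<..} \<inter> {a<..<b} \<in> sets lebesgue"
      by (subst (asm) sets_restrict_space_iff) auto
    moreover have "S n = (f -` {real n<..} \<inter> {a<..<b}) \<inter> {c-2*d..c+2*d}"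
      using J unfolding S_def by auto
    ultimately show ?thesis by auto
  qed
  have Sfm: "S n \<in> fmeasurable lebesgue" for n
    by (rule fmeasurableI2[OF lmeasurable_Icc_real _ Ssets]) (auto simp: S_def)
  have "(\<lambda>n. measure lebesgue (S n)) \<longlonglongrightarrow> measure lebesgue (\<Inter>i. S i)"
  proof (rule Lim_measure_decseq)
    show "range S \<subseteq> sets lebesgue" using Ssets by auto
    show "decseq S" unfolding decseq_def S_def by auto
    show "emeasure lebesgue (S i) \<noteq> \<infinity>" for i
      using Sfm[of i] by (auto simp: fmeasurable_def)
  qed
  moreover have "(\<Inter>i. S i) = {}"
  proof (rule ccontr)
    assume "(\<Inter>i. S i) \<noteq> {}"
    then obtain y where "\<And>i. y \<in> S i" by auto
    moreover obtain n :: nat where "f y < real n" using reals_Archimedean2 by blast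
    ultimately show False by (metis (no_types, lifting) S_def mem_Collect_eq not_less_iff_gr_or_eq)
  qed
  ultimately have "(\<lambda>n. measure lebesgue (S n)) \<longlonglongrightarrow> 0" by simp
  then have "\<forall>\<^sub>F n in sequentially. measure lebesgue (S n) < d/2"
    using d by (intro order_tendstoD(2)) auto
  then obtain n0 where n0: "measure lebesgue (S n0) < d/2"
    by (meson eventually_sequentially order_refl)
  show ?thesis
  proof (intro exI ballI)
    fix x assume x: "x \<in> {c-d..c+d}"
    define T where "T y = 2*x - y" for y :: real
    have Tim: "T -` S n0 = (\<lambda>y. (-1) *\<^sub>R y + 2*x) ` S n0"
    proof
      show "T -` S n0 \<subseteq> (\<lambda>y. (-1) *\<^sub>R y + 2*x) ` S n0"
      proof
        fix y assume "y \<in> T -` S n0"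
        then have "2*x - y \<in> S n0" by (simp add: T_def)
        moreover have "y = (-1) *\<^sub>R (2*x - y) + 2*x" by simp
        ultimately show "y \<in> (\<lambda>y. (-1) *\<^sub>R y + 2*x) ` S n0" by blast
      qed
      show "(\<lambda>y. (-1) *\<^sub>R y + 2*x) ` S n0 \<subseteq> T -` S n0"
        by (auto simp: T_def)
    qed
    have Tmeas: "T \<in> lebesgue \<rightarrow>\<^sub>M lebesgue"
    proof -
      have "(\<lambda>y. 2*x + (\<Sum>j\<in>Basis. ((-1) * (y \<bullet> j)) *\<^sub>R j)) \<in> lebesgue \<rightarrow>\<^sub>M lebesgue"
        by (rule lebesgue_affine_measurable) auto
      moreover have "(\<lambda>y. 2*x + (\<Sum>j\<in>Basis. ((-1) * (y \<bullet> j)) *\<^sub>R j)) = T"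
        by (auto simp: T_def fun_eq_iff)
      ultimately show ?thesis by simp
    qed
    have TS: "T -` S n0 \<in> sets lebesgue"
      using measurable_sets[OF Tmeas Ssets[of n0]] by simp
    have TSfm: "T -` S n0 \<in> fmeasurable lebesgue"
      by (rule fmeasurableI2[OF lmeasurable_Icc_real[of "2*x-c-2*d" "2*x-c+2*d"] _ TS])
        (auto simp: S_def T_def)
    have mT: "measure lebesgue (T -` S n0) = measure lebesgue (S n0)"
      unfolding Tim using measure_lebesgue_affine[of "-1" "2*x" "S n0"] by simp
    define A where "A = S n0 \<inter> {x..x+d}"
    define B where "B = T -` S n0 \<inter> {x..x+d}"
    have Asets: "A \<in> sets lebesgue" unfolding A_def using Ssets by auto
    have Bsets: "B \<in> sets lebesgue" unfolding B_def using TS by auto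
    have "measure lebesgue (A \<union> B) \<le> measure lebesgue A + measure lebesgue B"
      by (rule measure_Un_le[OF Asets Bsets])
    also have "measure lebesgue A \<le> measure lebesgue (S n0)"
      by (rule measure_mono_fmeasurable[OF _ Asets Sfm]) (auto simp: A_def)
    also have "measure lebesgue B \<le> measure lebesgue (T -` S n0)"
      by (rule measure_mono_fmeasurable[OF _ Bsets TSfm]) (auto simp: B_def)
    finally have mAB: "measure lebesgue (A \<union> B) < d" using mT n0 by simp
    have "\<not> {x..x+d} \<subseteq> A \<union> B"
    proof
      assume "{x..x+d} \<subseteq> A \<union> B"
      then have "measure lebesgue {x..x+d} \<le> measure lebesgue (A \<union> B)"
        by (intro measure_mono_fmeasurable fmeasurableI2[OF lmeasurable_Icc_real[of x "x+d"]] sets.Un[OF Asets Bsets])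
          (auto simp: A_def B_def)
      then show False using mAB d by simp
    qed
    then obtain y where y: "y \<in> {x..x+d}" "y \<notin> A" "y \<notin> B" by blast
    have yJ: "y \<in> {c-2*d..c+2*d}" and y2J: "2*x - y \<in> {c-2*d..c+2*d}"
      using x y(1) by auto
    have fy: "f y \<le> real n0" using y(2) yJ y(1) by (auto simp: A_def S_def)
    have fy2: "f (2*x - y) \<le> real n0" using y(3) y2J y(1) by (auto simp: B_def S_def T_def)
    have "f ((y + (2*x - y))/2) \<le> (f y + f (2*x - y))/2"
      using mc yJ y2J J by blast
    then show "f x \<le> real n0" using fy fy2 by simp
  qed
qed

lemma midconvex_bdd_cont:
  fixes f :: "real \<Rightarrow> real"
  assumes mc: "\<And>x y. x \<in> {a<..<b} \<Longrightarrow> y \<in> {a<..<b} \<Longrightarrow> f ((x+y)/2) \<le> (f x + f y)/2"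
    and d: "d > 0" and J: "{x0-d..x0+d} \<subseteq> {a<..<b}"
    and M: "\<And>x. x \<in> {x0-d..x0+d} \<Longrightarrow> f x \<le> M"
  shows "isCont f x0"
proof -
  have x0: "x0 \<in> {a<..<b}" using J d by (auto simp: subset_iff)
  have up: "f (x0 + s / 2^k) - f x0 \<le> (M - f x0) / 2^k" if "\<bar>s\<bar> \<le> d" for s k
  proof (induction k)
    case 0
    then show ?case using M[of "x0 + s"] that by (auto simp: abs_le_iff)
  next
    case (Suc k)
    have "\<bar>s / 2^k\<bar> \<le> d"
    proof -
      have dd: "d*1 \<le> d*2^k" by (rule mult_left_mono) (use d in auto)
      show ?thesis using that d by (simp add: abs_divide divide_le_eq) (use dd that in linarith)
    qed
    then have "x0 + s / 2^k \<in> {x0-d..x0+d}"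
      by (simp only: atLeastAtMost_iff abs_le_iff) linarith
    then have inJ: "x0 + s / 2^k \<in> {a<..<b}" using J by blast
    have "f ((x0 + (x0 + s / 2^k))/2) \<le> (f x0 + f (x0 + s/2^k))/2"
      using mc[OF x0 inJ] .
    moreover have "(x0 + (x0 + s / 2^k))/2 = x0 + s / 2^Suc k" by (simp add: field_simps)
    ultimately have "f (x0 + s / 2^Suc k) \<le> (f x0 + f (x0 + s/2^k))/2" by metis
    then have "f (x0 + s / 2^Suc k) - f x0 \<le> (f (x0 + s/2^k) - f x0) / 2" by (simp add: field_simps)
    also have "\<dots> \<le> ((M - f x0) / 2^k) / 2" by (rule divide_right_mono[OF Suc]) simp
    finally show ?case by simp
  qed
  have both: "\<bar>f (x0 + s / 2^k) - f x0\<bar> \<le> (M - f x0) / 2^k" if "\<bar>s\<bar> \<le> d" for s k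
  proof -
    have "\<bar>s / 2^k\<bar> \<le> d"
    proof -
      have dd: "d*1 \<le> d*2^k" by (rule mult_left_mono) (use d in auto)
      show ?thesis using that d by (simp add: abs_divide divide_le_eq) (use dd that in linarith)
    qed
    then have "x0 + s / 2^k \<in> {x0-d..x0+d}" "x0 + (-s) / 2^k \<in> {x0-d..x0+d}"
      by (simp_all only: atLeastAtMost_iff abs_le_iff minus_divide_left) linarith+
    then have i1: "x0 + s / 2^k \<in> {a<..<b}" and i2: "x0 + (-s) / 2^k \<in> {a<..<b}" using J by blast+
    have "f ((x0 + s / 2^k + (x0 + (-s) / 2^k))/2) \<le> (f (x0 + s / 2^k) + f (x0 + (-s) / 2^k))/2"
      using mc[OF i1 i2] .
    then have h1: "f x0 \<le> (f (x0 + s / 2^k) + f (x0 + (-s) / 2^k))/2" by simp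
    have h2: "f (x0 + (-s) / 2^k) - f x0 \<le> (M - f x0) / 2^k" using up[of "-s" k] that by simp
    have h3: "f (x0 + s / 2^k) - f x0 \<le> (M - f x0) / 2^k" using up[of s k] that by simp
    define P where "P = f (x0 + s / 2^k)"
    define Q where "Q = f (x0 + (-s) / 2^k)"
    define KK where "KK = (M - f x0) / 2^k"
    have "f x0 \<le> (P + Q)/2" "Q - f x0 \<le> KK" "P - f x0 \<le> KK"
      using h1 h2 h3 unfolding P_def Q_def KK_def by auto
    then have "\<bar>P - f x0\<bar> \<le> KK" by (simp add: abs_le_iff)
    then show ?thesis unfolding P_def KK_def .
  qed
  have K: "M - f x0 \<ge> 0" using M[of x0] d by simp
  show ?thesis unfolding continuous_at_eps_delta
  proof (intro allI impI)
    fix e :: real assume e: "e > 0"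
    obtain k :: nat where k: "(M - f x0) / e < 2^k"
      using real_arch_pow[of 2 "(M - f x0) / e"] by auto
    have Kk: "(M - f x0) / 2^k < e" using k e by (simp add: field_simps)
    show "\<exists>d'>0. \<forall>x'. dist x' x0 < d' \<longrightarrow> dist (f x') (f x0) < e"
    proof (intro exI conjI allI impI)
      show "d / 2^k > 0" using d by simp
      fix x' assume "dist x' x0 < d / 2^k"
      then have "\<bar>x' - x0\<bar> * 2^k < d" by (simp add: dist_real_def field_simps)
      then have "\<bar>2^k * (x' - x0)\<bar> \<le> d" by (simp add: abs_mult mult.commute)
      from both[OF this, of k] have "\<bar>f x' - f x0\<bar> \<le> (M - f x0) / 2^k" by simp
      then show "dist (f x') (f x0) < e" using Kk by (simp add: dist_real_def)
    qed
  qed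
qed

theorem theorem3p3:
  fixes h f :: "real \<Rightarrow> real" and a b :: real
  assumes h_cont: "continuous_on UNIV h"
    and h_nonneg: "\<And>t. h t \<ge> 0"
    and h_supermult: "\<And>x y. h (x * y) \<ge> h x * h y"
    and h_ge: "\<And>t. h t \<ge> t"
    and f_meas: "f \<in> borel_measurable (restrict_space lebesgue {a<..<b})"
    and f_midconv: "\<And>x y. x \<in> {a<..<b} \<Longrightarrow> y \<in> {a<..<b} \<Longrightarrow>
                      f ((x + y) / 2) \<le> h (1/2) * (f x + f y)"
  shows "continuous_on {a<..<b} f"
proof -
  have h1a: "h 1 \<ge> h 1 * h 1" using h_supermult[of 1 1] by simp
  have h1b: "h 1 \<ge> 1" using h_ge[of 1] .
  have h1: "h 1 \<le> 1"
  proof (rule ccontr)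
    assume "\<not> h 1 \<le> 1"
    then have "h 1 * 1 < h 1 * h 1" by (intro mult_strict_left_mono) auto
    then show False using h1a by simp
  qed
  have "h 1 \<ge> h 2 * h (1/2)" using h_supermult[of 2 "1/2"] by simp
  moreover have "h 2 * h (1/2) \<ge> 2 * h (1/2)"
    using h_ge[of 2] h_nonneg[of "1/2"] by (intro mult_right_mono) auto
  ultimately have "h (1/2) \<le> 1/2" using h1 by simp
  moreover have "h (1/2) \<ge> 1/2" using h_ge[of "1/2"] .
  ultimately have hh: "h (1/2) = 1/2" by simp
  have mc: "\<And>x y. x \<in> {a<..<b} \<Longrightarrow> y \<in> {a<..<b} \<Longrightarrow> f ((x+y)/2) \<le> (f x + f y)/2"
    using f_midconv hh by simp
  show ?thesis
  proof (intro continuous_at_imp_continuous_on ballI)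
    fix x0 assume x0: "x0 \<in> {a<..<b}"
    define d where "d = min (x0 - a) (b - x0) / 4"
    have d: "d > 0" using x0 by (simp add: d_def)
    have J2: "{x0-2*d..x0+2*d} \<subseteq> {a<..<b}"
    proof
      fix t assume t: "t \<in> {x0-2*d..x0+2*d}"
      have "d \<le> (x0 - a)/4" "d \<le> (b - x0)/4" unfolding d_def by auto
      then show "t \<in> {a<..<b}" using t x0 d by auto
    qed
    obtain M where M: "\<forall>x\<in>{x0-d..x0+d}. f x \<le> M"
      using midconvex_locbdd[OF f_meas mc d J2] by blast
    have J1: "{x0-d..x0+d} \<subseteq> {a<..<b}" using J2 d by (auto simp: subset_iff)
    show "isCont f x0"
      by (rule midconvex_bdd_cont[OF mc d J1]) (use M in auto)
  qed
qed

end
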